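(* Let $k\ge1$ and let real numbers $\eta_1,\dots,\eta_k$ satisfy $\eta_1+\cdots+\eta_k=1$ and $\eta_k\ge\eta_{k-1}\ge\cdots\ge\eta_1>0$. Then there exist sequences of positive integers $(a_{n,j})_{n\ge1}$, $1\le j\le k$, with $a_{1,1}<a_{1,2}<\cdots<a_{1,k}<a_{2,1}<\cdots<a_{2,k}<a_{3,1}<\cdots$, $$\lim_{n\to\infty}\frac{a_{n+1,1}-a_{n,k}}{a_{n+1,k}}=\eta_1,\qquad\lim_{n\to\infty}\frac{a_{n,i}-a_{n,i-1}}{a_{n,k}}=\eta_i\ (2\le i\le k),\qquad\lim_{n\to\infty}\frac{a_{n+1,1}}{a_{n,k}}=\infty,$$ such that, with $\zeta_j=\sum_{n\ge1}2^{-a_{n,j}}$, the set $\{1,\zeta_1,\dots,\zeta_k\}$ is linearly independent over $\mathbb{Q}$. *)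

theory Defs
  imports "HOL-Analysis.Analysis"
begin

end

theory Submission imports Defs begin

lemma pow2_half_le: "x \<le> (E::nat) \<Longrightarrow> (2::real)^E * (1/2)^x = 2^(E-x)"
proof -
  assume "x \<le> E"
  then have "(2::real)^E = 2^(E-x) * 2^x" by (simp add: power_add[symmetric])
  moreover have "(2::real)^x * (1/2)^x = 1" by (simp add: power_mult_distrib[symmetric])
  ultimately show ?thesis by (simp add: mult.assoc)
qed

lemma pow2_half_ge: "(E::nat) \<le> F \<Longrightarrow> (2::real)^E * (1/2)^F = (1/2)^(F-E)"
proof -
  assume "E \<le> F"
  then have "(1/2::real)^F = (1/2)^(F-E) * (1/2)^E" by (simp add: power_add[symmetric])
  moreover have "(2::real)^E * (1/2)^E = 1" by (simp add: power_mult_distrib[symmetric])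
  ultimately show ?thesis by (metis mult.assoc mult.commute mult_1)
qed

lemma small_lt1:
  assumes "C < 2^N0" "N0 \<le> m" "(0::real) \<le> C"
  shows "C * (1/2)^m < 1"
proof -
  have "(2::real)^N0 \<le> 2^m" using assms(2) by (simp add: power_increasing)
  then have "C < 2^m" using assms(1) by linarith
  then show ?thesis by (simp add: power_one_over field_simps)
qed

lemma indep:
  fixes e :: "nat \<Rightarrow> nat \<Rightarrow> nat" and k :: nat and c :: "nat \<Rightarrow> real"
  assumes k: "k \<ge> 1"
   and G1: "\<And>n j. 1 \<le> j \<Longrightarrow> j < k \<Longrightarrow> e n j + n + 1 \<le> e n (Suc j)"
   and G2: "\<And>n. e n k + n + 1 \<le> e (Suc n) 1"
   and cZ: "\<forall>j\<in>{0..k}. c j \<in> \<int>"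
   and eq: "c 0 + (\<Sum>j=1..k. c j * (\<Sum>n. (1/2::real) ^ e n j)) = 0"
  shows "\<forall>j\<in>{0..k}. c j = 0"
proof -
  have mono_in: "e n i + n + 1 \<le> e n j" if "1 \<le> i" "i < j" "j \<le> k" for n i j
    using that
  proof (induction j)
    case 0 then show ?case by simp
  next
    case (Suc j)
    show ?case
    proof (cases "i = j")
      case True then show ?thesis using G1[of i n] Suc.prems by simp
    next
      case False
      then have "e n i + n + 1 \<le> e n j" using Suc by simp
      moreover have "e n j + n + 1 \<le> e n (Suc j)" using G1[of j n] Suc.prems False by simp
      ultimately show ?thesis by simp
    qed
  qed
  have le_in: "e n 1 \<le> e n j \<and> e n j \<le> e n k" if "1 \<le> j" "j \<le> k" for n j
    using mono_in[of 1 j n] mono_in[of j k n] that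
    by (cases "j = 1"; cases "j = k"; simp)
  have grow: "e N 1 + m \<le> e (m + N) 1" for N m
  proof (induction m)
    case 0 then show ?case by simp
  next
    case (Suc m)
    have "e (m+N) 1 \<le> e (m+N) k" using le_in[of k] k by simp
    then show ?case using G2[of "m+N"] Suc by simp
  qed
  have ge_n: "n \<le> e n j" if "1 \<le> j" "j \<le> k" for n j
    using grow[of 0 n] le_in[OF that, of n] by simp
  have kmono: "e n k \<le> e N k" if "n \<le> N" for n N
  proof (rule lift_Suc_mono_le[OF _ that])
    fix m
    show "e m k \<le> e (Suc m) k" using G2[of m] le_in[of k "Suc m"] k by simp
  qed
  have summ: "summable (\<lambda>n. (1/2::real) ^ e n j)" if "1 \<le> j" "j \<le> k" for j
  proof (rule summable_comparison_test'[where g = "\<lambda>n. (1/2::real)^n" and N = 0])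
    show "summable (\<lambda>n. (1/2::real)^n)" by (rule summable_geometric) simp
    fix n :: nat
    show "norm ((1/2::real) ^ e n j) \<le> (1/2)^n"
      using ge_n[OF that, of n] by (simp add: power_decreasing)
  qed
  define t where "t N j = (\<Sum>m. (1/2::real) ^ e (m + N) j)" for N j
  have summt: "summable (\<lambda>m. (1/2::real) ^ e (m + N) j)" if "1 \<le> j" "j \<le> k" for N j
    using summable_ignore_initial_segment[OF summ[OF that], of N] by simp
  have tnn: "0 \<le> t N j" if "1 \<le> j" "j \<le> k" for N j unfolding t_def
    by (auto intro!: suminf_nonneg summt that)
  have tbound: "t N j \<le> 2 * (1/2)^e N 1" if "1 \<le> j" "j \<le> k" for N j
  proof -
    have "t N j \<le> (\<Sum>m. (1/2::real)^e N 1 * (1/2)^m)" unfolding t_def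
    proof (rule suminf_le)
      fix m
      have "e N 1 + m \<le> e (m+N) j" using grow[of N m] le_in[OF that, of "m+N"] by simp
      then have "(1/2::real) ^ e (m + N) j \<le> (1/2)^(e N 1 + m)" by (simp add: power_decreasing)
      then show "(1/2::real) ^ e (m + N) j \<le> (1/2)^e N 1 * (1/2)^m" by (simp add: power_add)
      show "summable (\<lambda>m. (1/2::real) ^ e (m + N) j)" by (rule summt[OF that])
      show "summable (\<lambda>m. (1/2::real)^e N 1 * (1/2)^m)"
        by (intro summable_mult summable_geometric) simp
    qed
    also have "\<dots> = (1/2)^e N 1 * 2"
      using suminf_mult[of "\<lambda>m. (1/2::real)^m" "(1/2)^e N 1"] summable_geometric[of "1/2::real"]
        suminf_geometric[of "1/2::real"] by simp
    finally show ?thesis by simp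
  qed
  have split: "(\<Sum>n. (1/2::real) ^ e n j) = t N j + (\<Sum>n<N. (1/2)^e n j)" if "1 \<le> j" "j \<le> k" for N j
    unfolding t_def by (rule suminf_split_initial_segment[OF summ[OF that]])
  have thead: "t N j = (1/2)^e N j + t (Suc N) j" if "1 \<le> j" "j \<le> k" for N j
  proof -
    have "t (Suc N) j = t N j - (1/2)^e N j"
      unfolding t_def using suminf_split_head[OF summt[OF that, of N]] by simp
    then show ?thesis by simp
  qed
  define C where "C = (\<Sum>j=1..k. \<bar>c j\<bar>)"
  have C0: "0 \<le> C" unfolding C_def by (simp add: sum_nonneg)
  obtain N0 where N0: "C < 2^N0" using real_arch_pow[of 2 C] by auto
  define R where "R N = (\<Sum>j=1..k. c j * t (Suc N) j)" for N
  have RZ: "2^e N k * R N \<in> \<int>" for N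
  proof -
    have "R N = - c 0 - (\<Sum>j=1..k. c j * (\<Sum>n<Suc N. (1/2)^e n j))"
    proof -
      have "(\<Sum>j=1..k. c j * (\<Sum>n. (1/2::real) ^ e n j)) =
          (\<Sum>j=1..k. c j * t (Suc N) j + c j * (\<Sum>n<Suc N. (1/2)^e n j))"
      proof (rule sum.cong[OF refl])
        fix j assume "j \<in> {1..k}"
        then show "c j * (\<Sum>n. (1/2::real) ^ e n j) = c j * t (Suc N) j + c j * (\<Sum>n<Suc N. (1/2)^e n j)"
          using split[of j "Suc N"] by (metis atLeastAtMost_iff distrib_left)
      qed
      then have "c 0 + (\<Sum>j=1..k. c j * t (Suc N) j + c j * (\<Sum>n<Suc N. (1/2)^e n j)) = 0"
        using eq by simp
      then show ?thesis unfolding R_def by (simp add: sum.distrib algebra_simps)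
    qed
    then have "2^e N k * R N = - (2^e N k * c 0) - (\<Sum>j=1..k. c j * (\<Sum>n<Suc N. 2^e N k * (1/2)^e n j))"
      by (simp del: sum.lessThan_Suc add: right_diff_distrib sum_distrib_left mult.left_commute)
    also have "\<dots> = - (2^e N k * c 0) - (\<Sum>j=1..k. c j * (\<Sum>n<Suc N. 2^(e N k - e n j)))"
    proof -
      have "(\<Sum>n<Suc N. (2::real)^e N k * (1/2)^e n j) = (\<Sum>n<Suc N. 2^(e N k - e n j))"
        if "j \<in> {1..k}" for j
      proof (rule sum.cong[OF refl])
        fix n assume "n \<in> {..<Suc N}"
        then have "e n j \<le> e N k" using le_in[of j n] kmono[of n N] that by force
        then show "(2::real)^e N k * (1/2)^e n j = 2^(e N k - e n j)" by (rule pow2_half_le)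
      qed
      then show ?thesis by (intro arg_cong2[where f = "(-)"] refl sum.cong) auto
    qed
    also have "\<dots> \<in> \<int>"
      using cZ by (intro Ints_diff Ints_minus Ints_mult Ints_sum Ints_power) auto
    finally show ?thesis .
  qed
  have Rsmall: "\<bar>2^e N k * R N\<bar> \<le> C * (1/2)^N" for N
  proof -
    have "\<bar>R N\<bar> \<le> (\<Sum>j=1..k. \<bar>c j\<bar> * t (Suc N) j)"
      unfolding R_def using tnn
      by (auto intro!: order.trans[OF sum_abs] sum_mono simp: abs_mult)
    also have "\<dots> \<le> (\<Sum>j=1..k. \<bar>c j\<bar> * (2 * (1/2)^e (Suc N) 1))"
      by (intro sum_mono mult_left_mono tbound) auto
    finally have "\<bar>R N\<bar> \<le> C * (2 * (1/2)^e (Suc N) 1)" unfolding C_def by (simp add: sum_distrib_right)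
    then have "\<bar>2^e N k * R N\<bar> \<le> C * (2 * (2^e N k * (1/2)^e (Suc N) 1))"
      by (simp add: abs_mult)
    also have "2^e N k * (1/2::real)^e (Suc N) 1 = (1/2)^(e (Suc N) 1 - e N k)"
      using G2[of N] by (intro pow2_half_ge) simp
    also have "(1/2::real)^(e (Suc N) 1 - e N k) \<le> (1/2)^(Suc N)"
      using G2[of N] by (intro power_decreasing) auto
    finally show ?thesis using C0 by (simp add: mult_left_mono)
  qed
  have R0: "R N = 0" if "N \<ge> N0" for N
  proof -
    have "2^e N k * R N = 0"
      using Ints_nonzero_abs_less1[OF RZ[of N]] Rsmall[of N] small_lt1[OF N0 that C0] by linarith
    then show ?thesis by simp
  qed
  have B0: "(\<Sum>j=1..k. c j * (1/2)^e n j) = 0" if nN: "n \<ge> Suc N0" for n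
  proof -
    obtain N where n: "n = Suc N" "N \<ge> N0" using nN by (cases n) auto
    have "R N - R (Suc N) = (\<Sum>j=1..k. c j * (1/2)^e n j)"
    proof -
      have "R N - R (Suc N) = (\<Sum>j=1..k. c j * t (Suc N) j - c j * t (Suc (Suc N)) j)"
        unfolding R_def by (rule sum_subtractf[symmetric])
      also have "\<dots> = (\<Sum>j=1..k. c j * (1/2)^e n j)"
      proof (rule sum.cong[OF refl])
        fix j assume "j \<in> {1..k}"
        then have "t (Suc N) j = (1/2)^e (Suc N) j + t (Suc (Suc N)) j" by (intro thead) auto
        then show "c j * t (Suc N) j - c j * t (Suc (Suc N)) j = c j * (1/2)^e n j"
          unfolding n(1) by (simp add: algebra_simps)
      qed
      finally show ?thesis .
    qed
    then show ?thesis using R0[of N] R0[of "Suc N"] n(2) by simp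
  qed
  have cj0: "c j = 0" if "1 \<le> j" "j \<le> k" for j
    using that
  proof (induction j rule: less_induct)
    case (less j)
    define n where "n = Suc N0"
    define f where "f i = c i * (1/2::real)^e n i" for i
    have "(\<Sum>i=1..k. f i) = (\<Sum>i=j..k. f i)"
    proof (rule sum.mono_neutral_right)
      show "\<forall>i\<in>{1..k} - {j..k}. f i = 0" using less.IH unfolding f_def by auto
    qed (use less.prems in auto)
    also have "\<dots> = f j + (\<Sum>i=Suc j..k. f i)" using less.prems by (rule_tac sum.atLeast_Suc_atMost) simp
    finally have "f j + (\<Sum>i=Suc j..k. f i) = 0" using B0[of n] unfolding n_def f_def by simp
    then have "f j = - (\<Sum>i=Suc j..k. f i)" by linarith
    then have "2^e n j * f j = - (\<Sum>i=Suc j..k. 2^e n j * f i)"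
      by (simp add: sum_distrib_left)
    moreover have "2^e n j * f j = c j" unfolding f_def
      by (simp add: power_mult_distrib[symmetric] mult.left_commute)
    ultimately have cj: "c j = - (\<Sum>i=Suc j..k. 2^e n j * f i)" by simp
    have "\<bar>c j\<bar> \<le> (\<Sum>i=Suc j..k. \<bar>2^e n j * f i\<bar>)" unfolding cj by (simp add: sum_abs)
    also have "\<dots> \<le> (\<Sum>i=Suc j..k. \<bar>c i\<bar> * (1/2)^n)"
    proof (rule sum_mono)
      fix i assume i: "i \<in> {Suc j..k}"
      then have le: "e n j + n + 1 \<le> e n i" using mono_in[of j i n] less.prems by auto
      have "\<bar>2^e n j * f i\<bar> = \<bar>c i\<bar> * (2^e n j * (1/2)^e n i)" unfolding f_def
        by (simp add: abs_mult)
      also have "2^e n j * (1/2::real)^e n i = (1/2)^(e n i - e n j)" using le by (intro pow2_half_ge) simp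
      also have "(1/2::real)^(e n i - e n j) \<le> (1/2)^n" using le by (intro power_decreasing) auto
      finally show "\<bar>2^e n j * f i\<bar> \<le> \<bar>c i\<bar> * (1/2)^n" by (simp add: mult_left_mono)
    qed
    also have "\<dots> \<le> C * (1/2)^n" unfolding C_def sum_distrib_right[symmetric]
      by (intro mult_right_mono sum_mono2) auto
    also have "\<dots> < 1" using small_lt1[OF N0 _ C0, of n] unfolding n_def by linarith
    finally show ?case using Ints_nonzero_abs_less1[of "c j"] cZ less.prems by auto
  qed
  have "c 0 = 0" using eq cj0 by simp
  then show ?thesis using cj0 by (metis atLeastAtMost_iff less_one not_less)
qed

lemma common_denom:
  assumes "finite A" "\<forall>j\<in>A. q j \<in> \<rat>"
  shows "\<exists>d::nat. d > 0 \<and> (\<forall>j\<in>A. real d * q j \<in> \<int>)"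
  using assms
proof (induction A rule: finite_induct)
  case empty then show ?case by (intro exI[of _ 1]) simp
next
  case (insert x A)
  then obtain d :: nat where d: "d > 0" "\<forall>j\<in>A. real d * q j \<in> \<int>" by auto
  from insert.prems have qx: "q x \<in> \<rat>" by simp
  obtain p b :: int where pb: "b > 0" "q x = of_int p / of_int b" using Rats_cases'[OF qx] by metis
  define d' where "d' = d * nat b"
  have "real d' * q x = real d * of_int p" unfolding d'_def pb using pb(1) by simp
  then have x: "real d' * q x \<in> \<int>" by simp
  have "real d' * q j \<in> \<int>" if "j \<in> A" for j
  proof -
    have "real d' * q j = of_int (nat b) * (real d * q j)" unfolding d'_def by simp
    then show ?thesis using d(2) that by (metis Ints_mult Ints_of_int)
  qed
  moreover have "d' > 0" unfolding d'_def using d pb by simp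
  ultimately show ?case using x by auto
qed

lemma floor_ratio_lim:
  fixes X :: "nat \<Rightarrow> real"
  assumes X: "filterlim X at_top sequentially"
  shows "(\<lambda>n. real_of_int \<lfloor>s * X n\<rfloor> / X n) \<longlonglongrightarrow> s"
proof (rule tendsto_sandwich[of "\<lambda>n. s - inverse (X n)" _ _ "\<lambda>n. s"])
  have ev: "eventually (\<lambda>n. 1 \<le> X n) sequentially" using X by (simp add: filterlim_at_top)
  show "eventually (\<lambda>n. s - inverse (X n) \<le> real_of_int \<lfloor>s * X n\<rfloor> / X n) sequentially"
    using ev
  proof eventually_elim
    case (elim n)
    have "s * X n - 1 \<le> real_of_int \<lfloor>s * X n\<rfloor>" by linarith
    then have "(s * X n - 1) / X n \<le> real_of_int \<lfloor>s * X n\<rfloor> / X n"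
      using elim by (intro divide_right_mono) auto
    moreover have "s - inverse (X n) = (s * X n - 1) / X n" using elim by (simp add: field_simps)
    ultimately show ?case by simp
  qed
  show "eventually (\<lambda>n. real_of_int \<lfloor>s * X n\<rfloor> / X n \<le> s) sequentially"
    using ev
  proof eventually_elim
    case (elim n)
    have "real_of_int \<lfloor>s * X n\<rfloor> \<le> s * X n" by linarith
    then show ?case using elim by (simp add: field_simps)
  qed
  show "(\<lambda>n. s - inverse (X n)) \<longlonglongrightarrow> s"
    using tendsto_diff[OF tendsto_const tendsto_inverse_0_at_top[OF X], of s] by simp
qed simp

theorem proposition2p7:
  fixes k :: nat and \<eta> :: "nat \<Rightarrow> real"
  assumes "k \<ge> 1"
    and "(\<Sum>j=1..k. \<eta> j) = 1"
    and "\<eta> 1 > 0"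
    and "\<And>j. 2 \<le> j \<Longrightarrow> j \<le> k \<Longrightarrow> \<eta> (j - 1) \<le> \<eta> j"
  shows "\<exists>a :: nat \<Rightarrow> nat \<Rightarrow> nat.
     (\<forall>n\<ge>1. \<forall>j\<in>{1..k}. a n j > 0)
   \<and> (\<forall>n\<ge>1. \<forall>j. 1 \<le> j \<and> j < k \<longrightarrow> a n j < a n (j + 1))
   \<and> (\<forall>n\<ge>1. a n k < a (n + 1) 1)
   \<and> (\<lambda>n. (real (a (n + 1) 1) - real (a n k)) / real (a (n + 1) k)) \<longlonglongrightarrow> \<eta> 1
   \<and> (\<forall>i\<in>{2..k}. (\<lambda>n. (real (a n i) - real (a n (i - 1))) / real (a n k)) \<longlonglongrightarrow> \<eta> i)
   \<and> filterlim (\<lambda>n. real (a (n + 1) 1) / real (a n k)) at_top sequentially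
   \<and> (\<forall>q :: nat \<Rightarrow> real. (\<forall>j\<in>{0..k}. q j \<in> \<rat>) \<and>
        q 0 + (\<Sum>j=1..k. q j * (\<Sum>n. (1/2::real) ^ a (n + 1) j)) = 0
        \<longrightarrow> (\<forall>j\<in>{0..k}. q j = 0))"
proof -
  note k = assms(1) and sum1 = assms(2) and eta1 = assms(3) and etamono = assms(4)
  have eta_ge: "\<eta> 1 \<le> \<eta> j" if "1 \<le> j" "j \<le> k" for j
    using that
  proof (induction j)
    case 0 then show ?case by simp
  next
    case (Suc j)
    show ?case
    proof (cases "j = 0")
      case True then show ?thesis by simp
    next
      case False
      then have "\<eta> 1 \<le> \<eta> j" using Suc by simp
      also have "\<eta> j \<le> \<eta> (Suc j)" using etamono[of "Suc j"] Suc.prems False by simp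
      finally show ?thesis .
    qed
  qed
  define s where "s j = (\<Sum>i=1..j. \<eta> i)" for j
  have s_Suc: "s (Suc j) = s j + \<eta> (Suc j)" for j unfolding s_def by simp
  have s1: "s 1 = \<eta> 1" unfolding s_def by simp
  have sk: "s k = 1" unfolding s_def using sum1 .
  have s_ge: "\<eta> 1 \<le> s j" if "1 \<le> j" "j \<le> k" for j
    using that
  proof (induction j)
    case 0 then show ?case by simp
  next
    case (Suc j)
    show ?case
    proof (cases "j = 0")
      case True then show ?thesis using s1 by simp
    next
      case False
      then show ?thesis using Suc eta_ge[of "Suc j"] eta1 s_Suc[of j] by simp
    qed
  qed
  have s_nn: "0 \<le> s j" if "j \<le> k" for j
    using s_ge[of j] that eta1 by (cases "j = 0") (auto simp: s_def)
  define T where "T = nat \<lceil>2 / \<eta> 1\<rceil>"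
  have T2: "2 \<le> \<eta> 1 * real T"
  proof -
    have "2 / \<eta> 1 \<le> real T" unfolding T_def by linarith
    then show ?thesis using eta1 by (simp add: field_simps)
  qed
  have eta_le1: "\<eta> 1 \<le> 1" using s_ge[of k] k sk by simp
  have T1: "1 \<le> real T" using T2 eta_le1 eta1
    by (smt (verit, best) mult_left_le_one_le of_nat_0_le_iff)
  define M where "M n = T^(Suc n) * fact (Suc n)" for n :: nat
  have MSuc: "real (M (Suc n)) = real T * (real n + 2) * real (M n)" for n
  proof -
    have "fact (Suc (Suc n)) = (real n + 2) * (fact (Suc n)::real)"
      by (metis add_2_eq_Suc' fact_Suc of_nat_Suc of_nat_add of_nat_numeral)
    then show ?thesis unfolding M_def by (simp del: fact_Suc)
  qed
  have etaM: "2 * (real n + 1) \<le> \<eta> 1 * real (M n)" for n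
  proof -
    have "real (M n) = real T * real T ^ n * fact (Suc n)" unfolding M_def by (simp del: fact_Suc)
    moreover have "1 \<le> real T ^ n" using T1 by (simp add: one_le_power)
    moreover have "real n + 1 \<le> fact (Suc n)"
    proof -
      have "real (Suc n) \<le> real (fact (Suc n))" using fact_ge_self[of "Suc n"] by (simp only: of_nat_le_iff)
      then show ?thesis by (simp del: fact_Suc)
    qed
    ultimately have "\<eta> 1 * real (M n) = (\<eta> 1 * real T) * (real T ^ n * fact (Suc n))" by simp
    also have "\<dots> \<ge> 2 * (1 * (real n + 1))"
      using T2 \<open>1 \<le> real T ^ n\<close> \<open>real n + 1 \<le> fact (Suc n)\<close>
      by (intro mult_mono) auto
    finally show ?thesis by simp
  qed
  have M1: "1 \<le> real (M n)" for n
    using etaM[of n] eta_le1 eta1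
    by (smt (verit, best) mult_left_le_one_le of_nat_0_le_iff)
  define a where "a n j = nat \<lfloor>s j * real (M n)\<rfloor>" for n j
  have ra: "real (a n j) = real_of_int \<lfloor>s j * real (M n)\<rfloor>" if "j \<le> k" for n j
    using s_nn[OF that] unfolding a_def by simp
  have ra_lo: "s j * real (M n) - 1 < real (a n j)" if "j \<le> k" for n j
    using ra[OF that, of n] by linarith
  have ra_hi: "real (a n j) \<le> s j * real (M n)" if "j \<le> k" for n j
    using ra[OF that, of n] by linarith
  have akM: "a n k = M n" for n unfolding a_def sk by simp
  have pos: "a n j > 0" if "1 \<le> j" "j \<le> k" for n j
  proof -
    have "\<eta> 1 * real (M n) \<le> s j * real (M n)" using s_ge[OF that] by (simp add: mult_right_mono)
    then show ?thesis using ra_lo[OF that(2), of n] etaM[of n] by simp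
  qed
  have gap1: "a n j + 2 * n + 1 < a n (Suc j)" if "1 \<le> j" "j < k" for n j
  proof -
    have "\<eta> 1 * real (M n) \<le> \<eta> (Suc j) * real (M n)" using eta_ge[of "Suc j"] that
      by (simp add: mult_right_mono)
    then have "real (a n j) + 2 * real n + 1 < real (a n (Suc j))"
      using ra_lo[of "Suc j" n] ra_hi[of j n] that etaM[of n] s_Suc[of j]
      by (simp add: algebra_simps)
    then show ?thesis by linarith
  qed
  have etaMS: "2 * (real m + 2) * real (M m) \<le> \<eta> 1 * real (M (Suc m))" for m
  proof -
    have "\<eta> 1 * real (M (Suc m)) = (\<eta> 1 * real T) * ((real m + 2) * real (M m))"
      unfolding MSuc by (simp add: mult_ac)
    moreover have "2 * ((real m + 2) * real (M m)) \<le> (\<eta> 1 * real T) * ((real m + 2) * real (M m))"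
      by (rule mult_right_mono[OF T2]) simp
    ultimately show ?thesis by (metis mult.assoc)
  qed
  have bigS: "(2 * real m + 3) * real (M m) < real (a (Suc m) 1)" for m
  proof -
    have "(2 * real m + 3) * 1 \<le> (2 * real m + 3) * real (M m)" by (rule mult_left_mono[OF M1]) simp
    moreover have "2 * (real m + 2) * real (M m) = (2 * real m + 3) * real (M m) + real (M m)"
      by (simp add: algebra_simps)
    moreover have "\<eta> 1 * real (M (Suc m)) - 1 < real (a (Suc m) 1)" using ra_lo[of 1 "Suc m"] k s1 by simp
    ultimately show ?thesis using etaMS[of m] M1[of m] by linarith
  qed
  have gap2: "a m k + 2 * m + 2 < a (Suc m) 1" for m
  proof -
    have "(2 * real m + 3) * real (M m) = 2 * real m * real (M m) + 3 * real (M m)" by (simp add: algebra_simps)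
    moreover have "2 * real m * 1 \<le> 2 * real m * real (M m)" by (rule mult_left_mono[OF M1]) simp
    ultimately have "real (a m k) + 2 * real m + 2 < real (a (Suc m) 1)"
      using bigS[of m] akM[of m] M1[of m] by linarith
    then show ?thesis by linarith
  qed
  have ratio_big: "real (2 * n + 3) \<le> real (a (n + 1) 1) / real (a n k)" for n
  proof -
    have "(2 * real n + 3) * real (M n) \<le> real (a (Suc n) 1)" using bigS[of n] by linarith
    then show ?thesis using M1[of n] by (simp add: akM field_simps)
  qed
  have Minf: "filterlim (\<lambda>n. real (M n)) at_top sequentially"
  proof (rule filterlim_at_top_mono[OF filterlim_real_sequentially])
    show "eventually (\<lambda>n. real n \<le> real (M n)) sequentially"
      using etaM eta_le1 eta1
      by (intro always_eventually allI) (smt (verit, best) mult_left_le_one_le of_nat_0_le_iff)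
  qed
  have MinfS: "filterlim (\<lambda>n. real (M (Suc n))) at_top sequentially"
    using filterlim_compose[OF Minf filterlim_Suc] by (simp add: o_def)
  show ?thesis
  proof (intro exI[of _ a] conjI allI impI ballI)
    fix n j :: nat assume "1 \<le> n" "j \<in> {1..k}" then show "a n j > 0" using pos by auto
  next
    fix n j :: nat assume "1 \<le> n" "1 \<le> j \<and> j < k" then show "a n j < a n (j + 1)" using gap1[of j n] by simp
  next
    fix n :: nat assume "1 \<le> n" then show "a n k < a (n + 1) 1" using gap2[of n] by simp
  next
    have eqf: "(\<lambda>n. (real (a (n + 1) 1) - real (a n k)) / real (a (n + 1) k)) =
      (\<lambda>n. real_of_int \<lfloor>s 1 * real (M (Suc n))\<rfloor> / real (M (Suc n)) - real (M n) / real (M (Suc n)))"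
      using k by (intro ext) (simp add: diff_divide_distrib ra akM)
    have z: "(\<lambda>n. real (M n) / real (M (Suc n))) \<longlonglongrightarrow> 0"
    proof (rule tendsto_sandwich[of "\<lambda>n. 0" _ _ "\<lambda>n. inverse (real (Suc n))"])
      show "eventually (\<lambda>n. 0 \<le> real (M n) / real (M (Suc n))) sequentially" by simp
      show "eventually (\<lambda>n. real (M n) / real (M (Suc n)) \<le> inverse (real (Suc n))) sequentially"
      proof (intro always_eventually allI)
        fix n
        have "real (M n) / real (M (Suc n)) = inverse (real T * (real n + 2))"
        proof -
          have "real (M n) \<noteq> 0" using M1[of n] by simp
          then have "real (M n) / ((real T * (real n + 2)) * real (M n)) = 1 / (real T * (real n + 2))"
            by (rule nonzero_divide_mult_cancel_right)
          then show ?thesis unfolding MSuc by (simp add: inverse_eq_divide)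
        qed
        also have "\<dots> \<le> inverse (real (Suc n))"
          using T1 by (intro le_imp_inverse_le) (auto intro: order.trans[OF _ mult_right_mono[of 1]])
        finally show "real (M n) / real (M (Suc n)) \<le> inverse (real (Suc n))" .
      qed
    qed (use LIMSEQ_inverse_real_of_nat in simp_all)
    show "(\<lambda>n. (real (a (n + 1) 1) - real (a n k)) / real (a (n + 1) k)) \<longlonglongrightarrow> \<eta> 1"
      unfolding eqf using tendsto_diff[OF floor_ratio_lim[OF MinfS, of "s 1"] z] s1 by simp
  next
    fix i :: nat assume i: "i \<in> {2..k}"
    have eqf: "(\<lambda>n. (real (a n i) - real (a n (i - 1))) / real (a n k)) =
      (\<lambda>n. real_of_int \<lfloor>s i * real (M n)\<rfloor> / real (M n) - real_of_int \<lfloor>s (i - 1) * real (M n)\<rfloor> / real (M n))"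
    proof (rule ext)
      fix n
      have r1: "real (a n (i - 1)) = real_of_int \<lfloor>s (i - 1) * real (M n)\<rfloor>" using i by (intro ra) auto
      have r2: "real (a n i) = real_of_int \<lfloor>s i * real (M n)\<rfloor>" using i by (intro ra) auto
      show "(real (a n i) - real (a n (i - 1))) / real (a n k) =
        real_of_int \<lfloor>s i * real (M n)\<rfloor> / real (M n) - real_of_int \<lfloor>s (i - 1) * real (M n)\<rfloor> / real (M n)"
        unfolding r1 r2 akM by (simp add: diff_divide_distrib)
    qed
    have "s i - s (i - 1) = \<eta> i" using s_Suc[of "i - 1"] i by simp
    then show "(\<lambda>n. (real (a n i) - real (a n (i - 1))) / real (a n k)) \<longlonglongrightarrow> \<eta> i"
      unfolding eqf using tendsto_diff[OF floor_ratio_lim[OF Minf, of "s i"] floor_ratio_lim[OF Minf, of "s (i - 1)"]]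
      by simp
  next
    show "filterlim (\<lambda>n. real (a (n + 1) 1) / real (a n k)) at_top sequentially"
    proof (rule filterlim_at_top_mono[OF filterlim_real_sequentially])
      show "eventually (\<lambda>n. real n \<le> real (a (n + 1) 1) / real (a n k)) sequentially"
        using ratio_big by (intro always_eventually allI) (smt (verit) of_nat_le_iff le_add1 mult_2 add.assoc)
    qed
  next
    fix q :: "nat \<Rightarrow> real"
    assume H: "(\<forall>j\<in>{0..k}. q j \<in> \<rat>) \<and> q 0 + (\<Sum>j=1..k. q j * (\<Sum>n. (1/2::real) ^ a (n + 1) j)) = 0"
    obtain d :: nat where d: "d > 0" "\<forall>j\<in>{0..k}. real d * q j \<in> \<int>"
      using common_denom[of "{0..k}" q] H by auto
    have eqd: "real d * q 0 + (\<Sum>j=1..k. (real d * q j) * (\<Sum>n. (1/2::real) ^ a (n + 1) j)) = 0"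
    proof -
      have "real d * (q 0 + (\<Sum>j=1..k. q j * (\<Sum>n. (1/2::real) ^ a (n + 1) j))) = 0" using H by simp
      then show ?thesis by (simp add: distrib_left sum_distrib_left mult.assoc)
    qed
    have all0: "\<forall>j\<in>{0..k}. real d * q j = 0"
    proof (rule indep[where e = "\<lambda>n j. a (n + 1) j"])
      show "1 \<le> k" by (rule k)
      show "a (n + 1) j + n + 1 \<le> a (n + 1) (Suc j)" if "1 \<le> j" "j < k" for n j
        using gap1[OF that, of "n+1"] by simp
      show "a (n + 1) k + n + 1 \<le> a (Suc n + 1) 1" for n
        using gap2[of "n+1"] by simp
    qed (use d eqd in auto)
    fix j :: nat assume "j \<in> {0..k}" then show "q j = 0" using all0 d by auto
  qed
qed
end
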